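(* Let $\mathsf{v}_1,\mathsf{v}_2\in V$ be consistently oriented, ultraparallel spacelike vectors. Suppose $p_i=a_i\mathsf{v}_i^- - b_i\mathsf{v}_i^+$ with $a_i,b_i>0$ for $i=1,2$ (regarded as points of $E$ via a chosen origin). Then the crooked planes $\mathcal{C}(\mathsf{v}_1,p_1)$ and $\mathcal{C}(\mathsf{v}_2,p_2)$ are disjoint.
   Context: $V=\mathbb{R}^3$ with Lorentzian inner product $x\cdot y=x_1y_1+x_2y_2-x_3y_3$ and standard orientation; $E$ is the affine space with translation space $V$. Null: $x\cdot x=0$; spacelike: $x\cdot x>0$; future-pointing: third coordinate positive. The Lorentzian cross product $\boxtimes$ is the bilinear map with $u\cdot(v\boxtimes w)=\det[u\ v\ w]$. Spacelike $\mathsf{u},\mathsf{v}$ are ultraparallel if $\mathsf{u}\boxtimes\mathsf{v}$ is spacelike. For spacelike $\mathsf{v}$, $\mathsf{v}^-,\mathsf{v}^+$ are the two future-pointing null vectors of Euclidean length $1$ in $\mathsf{v}^\perp$, labelled so that $(\mathsf{v}^-,\mathsf{v}^+,\mathsf{v})$ is positively oriented. Spacelike $\mathsf{v}_1,\mathsf{v}_2$ are consistently oriented if $\mathsf{v}_1\cdot\mathsf{v}_2<0$ and $\mathsf{v}_i\cdot\mathsf{v}_j^{\pm}\le0$ for $i\ne j$. For null $x$, $\mathcal{P}(x)$ is the set of spacelike $w\in x^\perp$ with $w^+$ a positive multiple of $x$. The crooked plane $\mathcal{C}(\mathsf{v},p)=(p+\mathcal{P}(\mathsf{v}^+))\cup(p+\mathcal{P}(\mathsf{v}^-))\cup(p+\{x:\mathsf{v}\cdot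 x=0,\ x\cdot x\le0\})$. *)

theory Defs
  imports "HOL-Analysis.Analysis"
begin

text \<open>Minkowski space V = R^3 with x.y = x1 y1 + x2 y2 - x3 y3.
  The affine space E is identified with real^3 via a chosen origin.\<close>

definition ldot :: "real^3 \<Rightarrow> real^3 \<Rightarrow> real" where
  "ldot x y = x$1 * y$1 + x$2 * y$2 - x$3 * y$3"

definition null_vec :: "real^3 \<Rightarrow> bool" where
  "null_vec x \<longleftrightarrow> ldot x x = 0"

definition spacelike :: "real^3 \<Rightarrow> bool" where
  "spacelike x \<longleftrightarrow> ldot x x > 0"

definition future_pointing :: "real^3 \<Rightarrow> bool" where
  "future_pointing x \<longleftrightarrow> x$3 > 0"

definition det3 :: "real^3 \<Rightarrow> real^3 \<Rightarrow> real^3 \<Rightarrow> real" where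
  "det3 u v w = det (\<chi> i j. (if j = 1 then u else if j = 2 then v else w) $ i :: real^3^3)"

definition lcross :: "real^3 \<Rightarrow> real^3 \<Rightarrow> real^3" where
  "lcross v w = (THE z. \<forall>u. ldot u z = det3 u v w)"

definition ultraparallel :: "real^3 \<Rightarrow> real^3 \<Rightarrow> bool" where
  "ultraparallel u v \<longleftrightarrow> spacelike u \<and> spacelike v \<and> spacelike (lcross u v)"

definition unit_null_perp :: "real^3 \<Rightarrow> real^3 \<Rightarrow> bool" where
  "unit_null_perp v x \<longleftrightarrow> null_vec x \<and> future_pointing x \<and> norm x = 1 \<and> ldot v x = 0"

definition vplus :: "real^3 \<Rightarrow> real^3" where
  "vplus v = (THE x. unit_null_perp v x \<and> (\<exists>y. unit_null_perp v y \<and> det3 y x v > 0))"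

definition vminus :: "real^3 \<Rightarrow> real^3" where
  "vminus v = (THE y. unit_null_perp v y \<and> (\<exists>x. unit_null_perp v x \<and> det3 y x v > 0))"

definition consistently_oriented :: "real^3 \<Rightarrow> real^3 \<Rightarrow> bool" where
  "consistently_oriented v1 v2 \<longleftrightarrow> spacelike v1 \<and> spacelike v2 \<and> ldot v1 v2 < 0 \<and>
     ldot v1 (vminus v2) \<le> 0 \<and> ldot v1 (vplus v2) \<le> 0 \<and>
     ldot v2 (vminus v1) \<le> 0 \<and> ldot v2 (vplus v1) \<le> 0"

definition Pset :: "real^3 \<Rightarrow> (real^3) set" where
  "Pset x = {w. spacelike w \<and> ldot x w = 0 \<and> (\<exists>c>0. vplus w = c *\<^sub>R x)}"

definition crooked_plane :: "real^3 \<Rightarrow> real^3 \<Rightarrow> (real^3) set" where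
  "crooked_plane v p = ((\<lambda>x. p + x) ` Pset (vplus v)) \<union> ((\<lambda>x. p + x) ` Pset (vminus v)) \<union>
     ((\<lambda>x. p + x) ` {x. ldot v x = 0 \<and> ldot x x \<le> 0})"

end

theory Submission
  imports Defs
begin


lemma det3_expand: "det3 u v w =
   u$1 * v$2 * w$3 + v$1 * w$2 * u$3 + w$1 * u$2 * v$3
 - u$1 * w$2 * v$3 - v$1 * u$2 * w$3 - w$1 * v$2 * u$3"
  unfolding det3_def det_3 by simp

lemma gram:
  "det3 a b c * det3 d e f = -( ldot a d * (ldot b e * ldot c f - ldot b f * ldot c e)
     - ldot a e * (ldot b d * ldot c f - ldot b f * ldot c d)
     + ldot a f * (ldot b d * ldot c e - ldot b e * ldot c d))"
  unfolding det3_expand ldot_def by algebra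

definition lc :: "real^3 \<Rightarrow> real^3 \<Rightarrow> real^3" where
  "lc v w = vector [v$2*w$3 - v$3*w$2, v$3*w$1 - v$1*w$3, -(v$1*w$2 - v$2*w$1)]"

lemma lc_prop: "ldot u (lc v w) = det3 u v w"
  unfolding lc_def ldot_def det3_expand by (simp add: algebra_simps)

lemma ldot_eq_all: assumes "\<forall>u. ldot u z = ldot u z'" shows "z = z'"
proof -
  have "ldot (axis i 1) z = ldot (axis i 1) z'" for i using assms by blast
  from this[of 1] this[of 2] this[of 3] show ?thesis unfolding ldot_def
    by (simp add: vec_eq_iff forall_3 axis_def)
qed

lemma lcross_prop: "ldot u (lcross v w) = det3 u v w"
proof -
  have "lcross v w = lc v w"
    unfolding lcross_def
    by (rule the_equality) (auto simp: lc_prop intro!: ldot_eq_all)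
  then show ?thesis by (simp add: lc_prop)
qed



lemma norm3: "norm (x::real^3) = sqrt (x$1^2 + x$2^2 + x$3^2)"
  unfolding norm_vec_def L2_set_def sum_3 by simp

lemma unp_iff: "unit_null_perp v x \<longleftrightarrow>
   x$1^2 + x$2^2 = x$3^2 \<and> x$3 > 0 \<and> x$1^2 + x$2^2 + x$3^2 = 1 \<and> v$1*x$1 + v$2*x$2 - v$3*x$3 = 0"
  unfolding unit_null_perp_def null_vec_def future_pointing_def ldot_def norm3
  by (auto simp: power2_eq_square algebra_simps)

lemma two_null:
  assumes "spacelike v"
  shows "\<exists>x1 x2. (\<forall>x. unit_null_perp v x \<longleftrightarrow> x = x1 \<or> x = x2) \<and> det3 x1 x2 v > 0"
proof -
  define a where "a = v$1"
  define b where "b = v$2"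
  define c where "c = v$3"
  define r where "r = a^2 + b^2"
  have sp: "r - c^2 > 0" using assms unfolding spacelike_def ldot_def a_def b_def c_def r_def
    by (simp add: power2_eq_square)
  have rpos: "r > 0" using sp by (smt (verit) zero_le_power2)
  define d where "d = sqrt (r - c^2)"
  have dpos: "d > 0" using sp d_def by simp
  have d2: "d^2 = r - c^2" using sp d_def by simp
  define s where "s = sqrt (1/2::real)"
  have spos: "s > 0" using s_def by simp
  have s2: "s^2 = 1/2" using s_def by simp
  define x1 :: "real^3" where "x1 = vector [(a*c - b*d)/r* s, (b*c + a*d)/r* s, s]"
  define x2 :: "real^3" where "x2 = vector [(a*c + b*d)/r* s, (b*c - a*d)/r* s, s]"
  have id1: "(a*c-b*d)^2 + (b*c+a*d)^2 = r^2"
  proof -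
    have "(a*c-b*d)^2 + (b*c+a*d)^2 = (a^2+b^2)*(c^2+d^2)" by algebra
    then show ?thesis using d2 r_def by (simp add: power2_eq_square)
  qed
  have id2: "(a*c+b*d)^2 + (b*c-a*d)^2 = r^2"
  proof -
    have "(a*c+b*d)^2 + (b*c-a*d)^2 = (a^2+b^2)*(c^2+d^2)" by algebra
    then show ?thesis using d2 r_def by (simp add: power2_eq_square)
  qed
  have u1: "unit_null_perp v x1"
  proof -
    have e1: "((a*c - b*d)/r* s)^2 + ((b*c + a*d)/r* s)^2 = s^2"
    proof -
      have "((a*c - b*d)/r* s)^2 + ((b*c + a*d)/r* s)^2 = ((a*c-b*d)^2 + (b*c+a*d)^2) * s^2 / r^2"
        using rpos by (simp add: field_simps power2_eq_square)
      then show ?thesis using id1 rpos by simp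
    qed
    have e2: "a*((a*c - b*d)/r* s) + b*((b*c + a*d)/r* s) - c* s = 0"
    proof -
      have "a*((a*c - b*d)/r* s) + b*((b*c + a*d)/r* s) = c * r * s / r"
        using rpos by (simp add: field_simps) (simp add: r_def power2_eq_square algebra_simps)
      then show ?thesis using rpos by simp
    qed
    show ?thesis unfolding unp_iff x1_def using e1 e2 s2 spos
      by (simp add: a_def b_def c_def)
  qed
  have u2: "unit_null_perp v x2"
  proof -
    have e1: "((a*c + b*d)/r* s)^2 + ((b*c - a*d)/r* s)^2 = s^2"
    proof -
      have "((a*c + b*d)/r* s)^2 + ((b*c - a*d)/r* s)^2 = ((a*c+b*d)^2 + (b*c-a*d)^2) * s^2 / r^2"
        using rpos by (simp add: field_simps power2_eq_square)
      then show ?thesis using id2 rpos by simp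
    qed
    have e2: "a*((a*c + b*d)/r* s) + b*((b*c - a*d)/r* s) - c* s = 0"
    proof -
      have "a*((a*c + b*d)/r* s) + b*((b*c - a*d)/r* s) = c * r * s / r"
        using rpos by (simp add: field_simps) (simp add: r_def power2_eq_square algebra_simps)
      then show ?thesis using rpos by simp
    qed
    show ?thesis unfolding unp_iff x2_def using e1 e2 s2 spos
      by (simp add: a_def b_def c_def)
  qed
  have onlytwo: "x = x1 \<or> x = x2" if ux: "unit_null_perp v x" for x
  proof -
    have n: "x$1^2 + x$2^2 = x$3^2" and f: "x$3 > 0" and o: "x$1^2 + x$2^2 + x$3^2 = 1"
      and p: "a*x$1 + b*x$2 - c*x$3 = 0"
      using ux unfolding unp_iff a_def b_def c_def by auto
    have "x$3^2 = s^2" using n o s2 by simp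
    then have x3: "x$3 = s" using f spos by (simp add: power2_eq_iff)
    define k where "k = a*x$2 - b*x$1"
    have lin: "a*x$1 + b*x$2 = c* s" using p x3 by simp
    have "k^2 = r*(x$1^2+x$2^2) - (a*x$1 + b*x$2)^2" unfolding k_def r_def by algebra
    also have "\<dots> = r* s^2 - (c* s)^2" using n x3 lin by simp
    also have "\<dots> = (s*d)^2" unfolding power_mult_distrib d2 using d2 by (simp add: algebra_simps)
    finally have kk: "k = s*d \<or> k = -(s*d)" by (simp add: power2_eq_iff)
    have "r * x$1 = a*c* s - b*k" "r * x$2 = b*c* s + a*k"
      using lin unfolding k_def r_def by (simp_all add: algebra_simps power2_eq_square)
        (metis (no_types, lifting) distrib_left mult.assoc mult.commute)+
    from kk show ?thesis
    proof
      assume k: "k = s*d"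
      have "x$1 = (a*c - b*d)/r* s" "x$2 = (b*c + a*d)/r* s"
        using \<open>r * x$1 = a*c* s - b*k\<close> \<open>r * x$2 = b*c* s + a*k\<close> k rpos
        by (simp_all add: field_simps)
      then have "x = x1" using x3 unfolding x1_def by (simp add: vec_eq_iff forall_3)
      then show ?thesis ..
    next
      assume k: "k = -(s*d)"
      have "x$1 = (a*c + b*d)/r* s" "x$2 = (b*c - a*d)/r* s"
        using \<open>r * x$1 = a*c* s - b*k\<close> \<open>r * x$2 = b*c* s + a*k\<close> k rpos
        by (simp_all add: field_simps)
      then have "x = x2" using x3 unfolding x2_def by (simp add: vec_eq_iff forall_3)
      then show ?thesis ..
    qed
  qed
  have dt: "det3 x1 x2 v = d^3 / r"
  proof -
    have "det3 x1 x2 v = 2 * s^2 * d * (r - c^2) / r"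
      unfolding det3_expand x1_def x2_def
      apply (simp add: a_def[symmetric] b_def[symmetric] c_def[symmetric])
      using rpos apply (simp add: field_simps)
      unfolding r_def
      apply algebra
      done
    then show ?thesis using s2 d2 by (simp add: power3_eq_cube power2_eq_square)
  qed
  have "det3 x1 x2 v > 0" using dt dpos rpos by simp
  then show ?thesis using u1 u2 onlytwo by blast
qed



lemma ldot_sym: "ldot x y = ldot y x" unfolding ldot_def by (simp add: algebra_simps)
lemma ldot_add_left: "ldot (x + y) z = ldot x z + ldot y z" unfolding ldot_def by (simp add: algebra_simps)
lemma ldot_diff_left: "ldot (x - y) z = ldot x z - ldot y z" unfolding ldot_def by (simp add: algebra_simps)
lemma ldot_scale_left: "ldot (c *\<^sub>R x) z = c * ldot x z" unfolding ldot_def by (simp add: algebra_simps)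

lemma det3_scale2: "det3 y (c *\<^sub>R x) w = c * det3 y x w" unfolding det3_expand by (simp add: algebra_simps)
lemma det3_swap12: "det3 x y v = - det3 y x v" unfolding det3_expand by (simp add: algebra_simps)
lemma det3_rep12: "det3 x x y = 0" unfolding det3_expand by (simp add: algebra_simps)
lemma det3_rep13: "det3 x y x = 0" unfolding det3_expand by (simp add: algebra_simps)

lemma vpm:
  assumes "spacelike v"
  shows "unit_null_perp v (vplus v) \<and> unit_null_perp v (vminus v) \<and> det3 (vminus v) (vplus v) v > 0"
proof -
  obtain x1 x2 where A: "\<And>x. unit_null_perp v x \<longleftrightarrow> x = x1 \<or> x = x2" and D: "det3 x1 x2 v > 0"
    using two_null[OF assms] by blast
  have D': "det3 x2 x1 v < 0" using D det3_swap12[of x2 x1 v] by simp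
  have "vplus v = x2"
    unfolding vplus_def
  proof (rule the_equality)
    show "unit_null_perp v x2 \<and> (\<exists>y. unit_null_perp v y \<and> det3 y x2 v > 0)" using A D by blast
  next
    fix x assume H: "unit_null_perp v x \<and> (\<exists>y. unit_null_perp v y \<and> det3 y x v > 0)"
    then obtain y where y: "unit_null_perp v y" "det3 y x v > 0" by blast
    have "x = x1 \<or> x = x2" "y = x1 \<or> y = x2" using A H y(1) by blast+
    then show "x = x2" using y(2) D' det3_rep12[of x1 v] det3_rep12[of x2 v] by auto
  qed
  moreover have "vminus v = x1"
    unfolding vminus_def
  proof (rule the_equality)
    show "unit_null_perp v x1 \<and> (\<exists>y. unit_null_perp v y \<and> det3 x1 y v > 0)" using A D by blast
  next
    fix x assume H: "unit_null_perp v x \<and> (\<exists>y. unit_null_perp v y \<and> det3 x y v > 0)"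
    then obtain y where y: "unit_null_perp v y" "det3 x y v > 0" by blast
    have "x = x1 \<or> x = x2" "y = x1 \<or> y = x2" using A H y(1) by blast+
    then show "x = x1" using y(2) D' det3_rep12[of x1 v] det3_rep12[of x2 v] by auto
  qed
  ultimately show ?thesis using A D by simp
qed

lemma nullprod:
  assumes "unit_null_perp v x" "unit_null_perp w y"
  shows "ldot x y \<le> 0"
proof -
  have x: "x$1^2 + x$2^2 = x$3^2" "x$3 > 0" and y: "y$1^2 + y$2^2 = y$3^2" "y$3 > 0"
    using assms unfolding unp_iff by blast+
  have e1: "(x$1*y$1 + x$2*y$2)^2 + (x$1*y$2 - x$2*y$1)^2 = (x$1^2 + x$2^2)*(y$1^2+y$2^2)" by algebra
  have e2: "(x$1^2 + x$2^2)*(y$1^2+y$2^2) = (x$3*y$3)^2" using x(1) y(1) by (simp add: power_mult_distrib)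
  have sq: "(x$1*y$1 + x$2*y$2)^2 \<le> (x$3*y$3)^2"
    using e1 e2 zero_le_power2[of "x$1*y$2 - x$2*y$1"] by linarith
  have nn: "0 \<le> x$3*y$3" using x(2) y(2) by simp
  have "x$1*y$1 + x$2*y$2 \<le> x$3*y$3"
    using power2_le_imp_le[OF sq nn] .
  then show ?thesis unfolding ldot_def by simp
qed

lemma nm_neg:
  assumes "spacelike v"
  shows "ldot (vminus v) (vplus v) < 0"
proof -
  let ?n = "vminus v" and ?m = "vplus v"
  have V: "unit_null_perp v ?m" "unit_null_perp v ?n" "det3 ?n ?m v > 0" using vpm[OF assms] by auto
  have z: "ldot ?n ?n = 0" "ldot ?m ?m = 0" "ldot ?n v = 0" "ldot ?m v = 0"
    using V unfolding unit_null_perp_def null_vec_def by (auto simp: ldot_sym)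
  have "det3 ?n ?m v * det3 ?n ?m v = (ldot ?n ?m)^2 * ldot v v"
  proof -
    have s: "ldot v ?n = 0" "ldot v ?m = 0" "ldot ?m ?n = ldot ?n ?m" using z by (simp_all add: ldot_sym)
    show ?thesis using gram[of ?n ?m v ?n ?m v] unfolding z s by (simp add: power2_eq_square)
  qed
  then have "ldot ?n ?m \<noteq> 0" using V(3) by auto
  moreover have "ldot ?n ?m \<le> 0" using nullprod V by blast
  ultimately show ?thesis by simp
qed



lemma basics:
  assumes "spacelike v"
  shows "ldot (vminus v) (vminus v) = 0" "ldot (vplus v) (vplus v) = 0"
    "ldot (vminus v) v = 0" "ldot (vplus v) v = 0" "ldot v (vminus v) = 0" "ldot v (vplus v) = 0"
    "ldot (vminus v) (vplus v) < 0" "ldot (vplus v) (vminus v) < 0" "det3 (vminus v) (vplus v) v > 0"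
    "unit_null_perp v (vplus v)" "unit_null_perp v (vminus v)"
proof -
  have V: "unit_null_perp v (vplus v)" "unit_null_perp v (vminus v)" "det3 (vminus v) (vplus v) v > 0"
    using vpm[OF assms] by auto
  then show "ldot (vminus v) (vminus v) = 0" "ldot (vplus v) (vplus v) = 0"
    "ldot (vminus v) v = 0" "ldot (vplus v) v = 0" "ldot v (vminus v) = 0" "ldot v (vplus v) = 0"
    unfolding unit_null_perp_def null_vec_def by (simp_all add: ldot_sym)
  show "ldot (vminus v) (vplus v) < 0" using nm_neg[OF assms] .
  then show "ldot (vplus v) (vminus v) < 0" by (simp add: ldot_sym)
  show "det3 (vminus v) (vplus v) v > 0" "unit_null_perp v (vplus v)" "unit_null_perp v (vminus v)"
    using V by auto
qed

lemma Pplus: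
  assumes "spacelike v" "w \<in> Pset (vplus v)"
  shows "ldot w v > 0 \<and> ldot w (vplus v) = 0"
proof -
  let ?n = "vminus v" and ?m = "vplus v"
  note B = basics[OF assms(1)]
  from assms(2) obtain c where w: "spacelike w" "ldot ?m w = 0" "c > 0" "vplus w = c *\<^sub>R ?m"
    unfolding Pset_def by blast
  have wm: "ldot w ?m = 0" using w(2) by (simp add: ldot_sym)
  let ?y = "vminus w"
  have W: "unit_null_perp w ?y" "det3 ?y (vplus w) w > 0" using vpm[OF w(1)] by auto
  have "det3 ?y ?m w > 0" using W(2) w(3,4) det3_scale2[of ?y c ?m w] by (simp add: zero_less_mult_iff)
  moreover have "det3 ?y ?m w * det3 ?n ?m v = ldot ?y ?m * ldot ?m ?n * ldot w v"
    using gram[of ?y ?m w ?n ?m v] unfolding B(2,4) wm by simp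
  ultimately have pos: "ldot ?y ?m * ldot ?m ?n * ldot w v > 0" using B(9) by (metis mult_pos_pos)
  have "ldot ?y ?m \<le> 0" using nullprod W(1) B(10) by blast
  then have "ldot ?y ?m * ldot ?m ?n \<ge> 0" using B(8) by (simp add: mult_nonpos_nonpos)
  then have "ldot w v > 0" using pos by (metis mult_nonneg_nonpos not_less)
  then show ?thesis using wm by simp
qed

lemma Pminus:
  assumes "spacelike v" "w \<in> Pset (vminus v)"
  shows "ldot w v < 0 \<and> ldot w (vminus v) = 0"
proof -
  let ?n = "vminus v" and ?m = "vplus v"
  note B = basics[OF assms(1)]
  from assms(2) obtain c where w: "spacelike w" "ldot ?n w = 0" "c > 0" "vplus w = c *\<^sub>R ?n"
    unfolding Pset_def by blast
  have wn: "ldot w ?n = 0" using w(2) by (simp add: ldot_sym)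
  let ?y = "vminus w"
  have W: "unit_null_perp w ?y" "det3 ?y (vplus w) w > 0" using vpm[OF w(1)] by auto
  have "det3 ?y ?n w > 0" using W(2) w(3,4) det3_scale2[of ?y c ?n w] by (simp add: zero_less_mult_iff)
  moreover have "det3 ?y ?n w * det3 ?n ?m v = - (ldot ?y ?n * ldot ?n ?m * ldot w v)"
    using gram[of ?y ?n w ?n ?m v] unfolding B(1,3) wn by simp
  ultimately have pos: "- (ldot ?y ?n * ldot ?n ?m * ldot w v) > 0" using B(9) by (metis mult_pos_pos)
  have "ldot ?y ?n \<le> 0" using nullprod W(1) B(11) by blast
  then have "ldot ?y ?n * ldot ?n ?m \<ge> 0" using B(7) by (simp add: mult_nonpos_nonpos)
  then have "ldot w v < 0"
  proof -
    assume A: "ldot ?y ?n * ldot ?n ?m \<ge> 0"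
    show ?thesis
    proof (rule ccontr)
      assume "\<not> ldot w v < 0"
      then have "0 \<le> ldot ?y ?n * ldot ?n ?m * ldot w v" using A by simp
      then show False using pos by linarith
    qed
  qed
  then show ?thesis using wn by simp
qed

lemma stem:
  assumes "spacelike v" "ldot v z = 0" "ldot z z \<le> 0"
  shows "ldot z (vminus v) * ldot z (vplus v) \<ge> 0"
proof -
  let ?n = "vminus v" and ?m = "vplus v"
  note B = basics[OF assms(1)]
  have zv: "ldot z v = 0" using assms(2) by (simp add: ldot_sym)
  have "det3 z ?n ?m * det3 ?n ?m v = 0"
    using gram[of z ?n ?m ?n ?m v] unfolding B(4,3) zv by simp
  then have d0: "det3 z ?n ?m = 0" using B(9) by simp
  have s: "ldot ?n z = ldot z ?n" "ldot ?m z = ldot z ?m" "ldot ?m ?n = ldot ?n ?m" by (simp_all add: ldot_sym)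
  have "det3 z ?n ?m * det3 z ?n ?m = ldot z z * (ldot ?n ?m)^2 - 2 * (ldot z ?n * ldot z ?m) * ldot ?n ?m"
    using gram[of z ?n ?m z ?n ?m] unfolding B(1,2) s by (simp add: power2_eq_square algebra_simps)
  then have e: "2 * (ldot z ?n * ldot z ?m) * ldot ?n ?m = ldot z z * (ldot ?n ?m)^2" using d0 by simp
  have "ldot z z * (ldot ?n ?m)^2 \<le> 0" using assms(3) by (simp add: mult_nonpos_nonneg)
  then have "(ldot z ?n * ldot z ?m) * ldot ?n ?m \<le> 0" using e by simp
  then show ?thesis using B(7) by (metis mult_neg_neg not_less order_less_imp_le)
qed

definition Hp :: "real^3 \<Rightarrow> real^3 \<Rightarrow> bool" where
  "Hp v x \<longleftrightarrow> (ldot x v \<ge> 0 \<and> ldot x (vplus v) < 0) \<or> (ldot x v \<le> 0 \<and> ldot x (vminus v) > 0)"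

lemma cp_H:
  assumes "spacelike v" "a > 0" "b > 0" "x \<in> crooked_plane v (a *\<^sub>R vminus v - b *\<^sub>R vplus v)"
  shows "Hp v x"
proof -
  let ?n = "vminus v" and ?m = "vplus v"
  let ?p = "a *\<^sub>R ?n - b *\<^sub>R ?m"
  note B = basics[OF assms(1)]
  have pv: "ldot ?p v = 0" using B by (simp add: ldot_diff_left ldot_scale_left)
  have pm: "ldot ?p ?m = a * ldot ?n ?m" using B by (simp add: ldot_diff_left ldot_scale_left)
  have pn: "ldot ?p ?n = - b * ldot ?n ?m" using B ldot_sym[of ?m ?n] by (simp add: ldot_diff_left ldot_scale_left)
  have pm': "ldot ?p ?m < 0" using pm B(7) assms(2) by (simp add: mult_pos_neg)
  have pn': "ldot ?p ?n > 0" using pn B(7) assms(3) by (simp add: mult_pos_neg)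
  from assms(4) consider (W1) w where "w \<in> Pset ?m" "x = ?p + w"
    | (W2) w where "w \<in> Pset ?n" "x = ?p + w"
    | (S) w where "ldot v w = 0" "ldot w w \<le> 0" "x = ?p + w"
    unfolding crooked_plane_def by blast
  then show ?thesis
  proof cases
    case (W1 w)
    with Pplus[OF assms(1) W1(1)] show ?thesis unfolding Hp_def
      using pv pm' by (simp add: ldot_add_left)
  next
    case (W2 w)
    with Pminus[OF assms(1) W2(1)] show ?thesis unfolding Hp_def
      using pv pn' by (simp add: ldot_add_left)
  next
    case (S w)
    have st: "ldot w ?n * ldot w ?m \<ge> 0" using stem[OF assms(1) S(1,2)] .
    have wv: "ldot w v = 0" using S(1) by (simp add: ldot_sym)
    show ?thesis
    proof (cases "ldot w ?m \<le> 0")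
      case True
      then show ?thesis unfolding Hp_def S(3) using pv pm' wv by (simp add: ldot_add_left)
    next
      case False
      then have "ldot w ?n \<ge> 0" using st by (metis mult_neg_pos not_le order_le_less linorder_not_less zero_less_mult_iff)
      then show ?thesis unfolding Hp_def S(3) using pv pn' wv by (simp add: ldot_add_left)
    qed
  qed
qed



lemma Iid: "ldot x (lcross v1 v2) * ldot y (lcross v1 v2) = -( ldot x y * (ldot v1 v1 * ldot v2 v2 - (ldot v1 v2)^2)
   - ldot x v1 * (ldot y v1 * ldot v2 v2 - ldot v1 v2 * ldot y v2)
   + ldot x v2 * (ldot y v1 * ldot v1 v2 - ldot v1 v1 * ldot y v2))"
  unfolding lcross_prop unfolding ldot_def det3_expand by algebra

lemma sign_real:
  fixes P om om' mu nu :: real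
  assumes "P > 0" "om^2 = P * mu^2" "om'^2 = P * nu^2" "mu \<le> 0" "nu \<le> 0" "om' * mu - nu * om > 0"
  shows "om = - (sqrt P * mu) \<and> om' = sqrt P * nu"
proof -
  have a: "om^2 = (sqrt P * mu)^2" "om'^2 = (sqrt P * nu)^2"
    using assms by (simp_all add: power_mult_distrib)
  then have o1: "om = sqrt P * mu \<or> om = - (sqrt P * mu)" and o2: "om' = sqrt P * nu \<or> om' = - (sqrt P * nu)"
    by (simp_all add: power2_eq_iff)
  have sp: "sqrt P > 0" using assms(1) by simp
  have mn: "mu * nu \<ge> 0" using assms(4,5) by (simp add: mult_nonpos_nonpos)
  show ?thesis
  proof (cases "om = sqrt P * mu")
    case True
    from o2 show ?thesis
    proof
      assume "om' = sqrt P * nu"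
      then have "om' * mu - nu * om = 0" using True by (simp add: algebra_simps)
      then show ?thesis using assms(6) by simp
    next
      assume "om' = - (sqrt P * nu)"
      then have "om' * mu - nu * om = - 2 * sqrt P * (mu * nu)" using True by (simp add: algebra_simps)
      moreover have "sqrt P * (mu * nu) \<ge> 0" using sp mn by simp
      ultimately show ?thesis using assms(6) by simp
    qed
  next
    case False
    then have om: "om = - (sqrt P * mu)" using o1 by blast
    from o2 show ?thesis
    proof
      assume "om' = sqrt P * nu" then show ?thesis using om by simp
    next
      assume "om' = - (sqrt P * nu)"
      then have "om' * mu - nu * om = 0" using om by (simp add: algebra_simps)
      then show ?thesis using assms(6) by simp
    qed
  qed
qed

lemma final_real:
  fixes P Q g m1 n1 m2 n2 y1 y2 y3 :: real
  assumes P: "P > 0" and Q: "Q > 0" and g: "g < 0" and gg: "g^2 > P * Q"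
    and s: "m1 \<le> 0" "n1 \<le> 0" "m2 \<le> 0" "n2 \<le> 0"
    and h1: "(y1 \<ge> 0 \<and> m1 * (P*y2 - g*y1 + sqrt P * y3) > 0) \<or> (y1 \<le> 0 \<and> n1 * (P*y2 - g*y1 - sqrt P * y3) < 0)"
    and h2: "(y2 \<ge> 0 \<and> m2 * (Q*y1 - g*y2 - sqrt Q * y3) > 0) \<or> (y2 \<le> 0 \<and> n2 * (Q*y1 - g*y2 + sqrt Q * y3) < 0)"
  shows False
proof -
  define a where "a = sqrt P"
  define c where "c = sqrt Q"
  have a: "a > 0" "a^2 = P" using P a_def by simp_all
  have c: "c > 0" "c^2 = Q" using Q c_def by simp_all
  have e1: "(a*c)^2 = P*Q" by (simp only: power_mult_distrib a(2) c(2))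
  have e2: "(-g)^2 = g^2" by (rule power2_minus)
  have "(a*c)^2 < (-g)^2" unfolding e1 e2 using gg .
  moreover have "0 \<le> -g" using g by simp
  ultimately have "a*c < -g" by (rule power2_less_imp_less)
  then have acg: "a*c + g < 0" by simp
  have k1: "c*a*a - a*g > 0" "a*c*c - c*g > 0"
  proof -
    have "c*a*a > 0" "a*c*c > 0" using a c by simp_all
    moreover have "a*g < 0" "c*g < 0" using a c g by (simp_all add: mult_pos_neg)
    ultimately show "c*a*a - a*g > 0" "a*c*c - c*g > 0" by linarith+
  qed
  have Pa: "P = a*a" and Qc: "Q = c*c" using a c by (simp_all add: power2_eq_square)
  have neg: "E < 0" if "m * E > 0" "m \<le> 0" for m E :: real
  proof (rule ccontr)
    assume "\<not> E < 0"
    then have "m * E \<le> 0" using mult_nonpos_nonneg[of m E] that(2) by simp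
    then show False using that(1) by simp
  qed
  have pos: "E > 0" if "m * E < 0" "m \<le> 0" for m E :: real
  proof (rule ccontr)
    assume "\<not> E > 0"
    then have "m * E \<ge> 0" using mult_nonpos_nonpos[of m E] that(2) by simp
    then show False using that(1) by simp
  qed
  from h1 show False
  proof
    assume A: "y1 \<ge> 0 \<and> m1 * (P*y2 - g*y1 + sqrt P * y3) > 0"
    then have E1: "a*a*y2 - g*y1 + a*y3 < 0" using neg[OF _ s(1)] unfolding Pa[symmetric] a_def[symmetric] by blast
    from h2 show False
    proof
      assume B: "y2 \<ge> 0 \<and> m2 * (Q*y1 - g*y2 - sqrt Q * y3) > 0"
      then have E2: "c*c*y1 - g*y2 - c*y3 < 0" using neg[OF _ s(3)] unfolding Qc[symmetric] c_def[symmetric] by blast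
      have "c * (a*a*y2 - g*y1 + a*y3) + a * (c*c*y1 - g*y2 - c*y3) < 0"
        using mult_pos_neg[OF c(1) E1] mult_pos_neg[OF a(1) E2] by linarith
      moreover have "c * (a*a*y2 - g*y1 + a*y3) + a * (c*c*y1 - g*y2 - c*y3) = y2 * (c*a*a - a*g) + y1*(a*c*c - c*g)"
        by (simp add: algebra_simps)
      moreover have "y2 * (c*a*a - a*g) \<ge> 0" "y1*(a*c*c - c*g) \<ge> 0"
        using A B k1 by (simp_all add: mult_nonneg_nonneg less_imp_le)
      ultimately show False by linarith
    next
      assume B: "y2 \<le> 0 \<and> n2 * (Q*y1 - g*y2 + sqrt Q * y3) < 0"
      then have E2: "c*c*y1 - g*y2 + c*y3 > 0" using pos[OF _ s(4)] unfolding Qc[symmetric] c_def[symmetric] by blast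
      have "c * (a*a*y2 - g*y1 + a*y3) - a * (c*c*y1 - g*y2 + c*y3) < 0"
        using mult_pos_neg[OF c(1) E1] mult_pos_pos[OF a(1) E2] by linarith
      moreover have "c * (a*a*y2 - g*y1 + a*y3) - a * (c*c*y1 - g*y2 + c*y3) = (a*c + g) * (a*y2 - c*y1)"
        by (simp add: algebra_simps)
      moreover have "a*y2 - c*y1 \<le> 0"
      proof -
        have "a*y2 \<le> 0" using A B a(1) mult_nonneg_nonpos[of a y2] by simp
        moreover have "c*y1 \<ge> 0" using A B c(1) mult_nonneg_nonneg[of c y1] by simp
        ultimately show ?thesis by linarith
      qed
      ultimately show False using acg mult_nonpos_nonpos[of "a*c+g" "a*y2 - c*y1"] by linarith
    qed
  next
    assume A: "y1 \<le> 0 \<and> n1 * (P*y2 - g*y1 - sqrt P * y3) < 0"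
    then have E1: "a*a*y2 - g*y1 - a*y3 > 0" using pos[OF _ s(2)] unfolding Pa[symmetric] a_def[symmetric] by blast
    from h2 show False
    proof
      assume B: "y2 \<ge> 0 \<and> m2 * (Q*y1 - g*y2 - sqrt Q * y3) > 0"
      then have E2: "c*c*y1 - g*y2 - c*y3 < 0" using neg[OF _ s(3)] unfolding Qc[symmetric] c_def[symmetric] by blast
      have "c * (a*a*y2 - g*y1 - a*y3) - a * (c*c*y1 - g*y2 - c*y3) > 0"
        using mult_pos_pos[OF c(1) E1] mult_pos_neg[OF a(1) E2] by linarith
      moreover have "c * (a*a*y2 - g*y1 - a*y3) - a * (c*c*y1 - g*y2 - c*y3) = (a*c + g) * (a*y2 - c*y1)"
        by (simp add: algebra_simps)
      moreover have "a*y2 - c*y1 \<ge> 0"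
      proof -
        have "a*y2 \<ge> 0" using A B a(1) mult_nonneg_nonneg[of a y2] by simp
        moreover have "c*y1 \<le> 0" using A B c(1) mult_nonneg_nonpos[of c y1] by simp
        ultimately show ?thesis by linarith
      qed
      ultimately show False using acg mult_nonpos_nonneg[of "a*c+g" "a*y2 - c*y1"] by linarith
    next
      assume B: "y2 \<le> 0 \<and> n2 * (Q*y1 - g*y2 + sqrt Q * y3) < 0"
      then have E2: "c*c*y1 - g*y2 + c*y3 > 0" using pos[OF _ s(4)] unfolding Qc[symmetric] c_def[symmetric] by blast
      have "c * (a*a*y2 - g*y1 - a*y3) + a * (c*c*y1 - g*y2 + c*y3) > 0"
        using mult_pos_pos[OF c(1) E1] mult_pos_pos[OF a(1) E2] by linarith
      moreover have "c * (a*a*y2 - g*y1 - a*y3) + a * (c*c*y1 - g*y2 + c*y3) = y2 * (c*a*a - a*g) + y1*(a*c*c - c*g)"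
        by (simp add: algebra_simps)
      moreover have "y2 * (c*a*a - a*g) \<le> 0" "y1*(a*c*c - c*g) \<le> 0"
        using A B k1 by (simp_all add: mult_nonpos_nonneg less_imp_le)
      ultimately show False by linarith
    qed
  qed
qed



lemma main:
  assumes co: "consistently_oriented v1 v2" and up: "ultraparallel v1 v2"
  shows "\<not> (Hp v1 x \<and> Hp v2 x)"
proof
  assume H: "Hp v1 x \<and> Hp v2 x"
  have sp1: "spacelike v1" and sp2: "spacelike v2" and gneg: "ldot v1 v2 < 0"
    and c1: "ldot v1 (vminus v2) \<le> 0" "ldot v1 (vplus v2) \<le> 0"
            "ldot v2 (vminus v1) \<le> 0" "ldot v2 (vplus v1) \<le> 0"
    using co unfolding consistently_oriented_def by auto
  define w where "w = lcross v1 v2"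
  define P where "P = ldot v1 v1"
  define Q where "Q = ldot v2 v2"
  define G where "G = ldot v1 v2"
  define W where "W = ldot w w"
  have Wpos: "W > 0" using up unfolding ultraparallel_def spacelike_def W_def w_def by simp
  have Ppos: "P > 0" using sp1 unfolding spacelike_def P_def .
  have Qpos: "Q > 0" using sp2 unfolding spacelike_def Q_def .
  have Gneg: "G < 0" using gneg unfolding G_def .
  have wv1: "ldot v1 w = 0" unfolding w_def lcross_prop by (rule det3_rep12)
  have wv2: "ldot v2 w = 0" unfolding w_def lcross_prop by (rule det3_rep13)
  have wv1': "ldot w v1 = 0" and wv2': "ldot w v2 = 0" using wv1 wv2 ldot_sym by metis+
  have v21: "ldot v2 v1 = G" unfolding G_def by (rule ldot_sym)
  have Wdet: "det3 w v1 v2 = W" unfolding W_def using lcross_prop[of w v1 v2] unfolding w_def by simp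
  have I: "ldot a w * ldot b w = -(ldot a b * (P*Q - G^2) - ldot a v1 * (ldot b v1 * Q - G * ldot b v2)
            + ldot a v2 * (ldot b v1 * G - P * ldot b v2))" for a b
    unfolding w_def P_def Q_def G_def by (rule Iid)
  have WPQ: "P*Q - G^2 = - W"
  proof -
    have "W * W = - (W * (P*Q - G^2))" using I[of w w] unfolding wv1' wv2' W_def by simp
    then have "W * (W + (P*Q - G^2)) = 0" by (simp add: algebra_simps)
    then show ?thesis using Wpos by simp
  qed
  have GG: "G^2 > P*Q" using WPQ Wpos by linarith

  let ?n1 = "vminus v1" and ?m1 = "vplus v1" and ?n2 = "vminus v2" and ?m2 = "vplus v2"
  note B1 = basics[OF sp1] and B2 = basics[OF sp2]
  define mu1 where "mu1 = ldot ?m1 v2"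
  define nu1 where "nu1 = ldot ?n1 v2"
  define om1 where "om1 = ldot ?m1 w"
  define om1' where "om1' = ldot ?n1 w"
  define mu2 where "mu2 = ldot ?m2 v1"
  define nu2 where "nu2 = ldot ?n2 v1"
  define om2 where "om2 = ldot ?m2 w"
  define om2' where "om2' = ldot ?n2 w"
  have mu1: "mu1 \<le> 0" using c1(4) unfolding mu1_def by (simp add: ldot_sym)
  have nu1: "nu1 \<le> 0" using c1(3) unfolding nu1_def by (simp add: ldot_sym)
  have mu2: "mu2 \<le> 0" using c1(2) unfolding mu2_def by (simp add: ldot_sym)
  have nu2: "nu2 \<le> 0" using c1(1) unfolding nu2_def by (simp add: ldot_sym)

  have sq1: "om1^2 = P * mu1^2"
    using I[of ?m1 ?m1] unfolding B1(2,4) om1_def[symmetric] mu1_def[symmetric]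
    by (simp add: power2_eq_square)
  have sq1': "om1'^2 = P * nu1^2"
    using I[of ?n1 ?n1] unfolding B1(1,3) om1'_def[symmetric] nu1_def[symmetric]
    by (simp add: power2_eq_square)
  have sq2: "om2^2 = Q * mu2^2"
    using I[of ?m2 ?m2] unfolding B2(2,4) om2_def[symmetric] mu2_def[symmetric]
    by (simp add: power2_eq_square)
  have sq2': "om2'^2 = Q * nu2^2"
    using I[of ?n2 ?n2] unfolding B2(1,3) om2'_def[symmetric] nu2_def[symmetric]
    by (simp add: power2_eq_square)

  have or1: "om1' * mu1 - nu1 * om1 > 0"
  proof -
    have "det3 ?n1 ?m1 v1 * det3 w v1 v2 = P * (om1' * mu1 - nu1 * om1)"
      using gram[of ?n1 ?m1 v1 w v1 v2] unfolding B1(3,4) wv1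
      unfolding om1_def[symmetric] om1'_def[symmetric] mu1_def[symmetric] nu1_def[symmetric] P_def[symmetric]
      by (simp add: algebra_simps)
    moreover have "det3 ?n1 ?m1 v1 * det3 w v1 v2 > 0" using B1(9) Wpos Wdet by simp
    ultimately show ?thesis using Ppos by (simp add: zero_less_mult_iff)
  qed
  have or2: "om2 * nu2 - mu2 * om2' > 0"
  proof -
    have "det3 ?n2 ?m2 v2 * det3 w v1 v2 = Q * (om2 * nu2 - mu2 * om2')"
      using gram[of ?n2 ?m2 v2 w v1 v2] unfolding B2(3,4) wv2
      unfolding om2_def[symmetric] om2'_def[symmetric] mu2_def[symmetric] nu2_def[symmetric] Q_def[symmetric]
      by (simp add: algebra_simps)
    moreover have "det3 ?n2 ?m2 v2 * det3 w v1 v2 > 0" using B2(9) Wpos Wdet by simp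
    ultimately show ?thesis using Qpos by (simp add: zero_less_mult_iff)
  qed
  have o1: "om1 = - (sqrt P * mu1) \<and> om1' = sqrt P * nu1"
    using sign_real[OF Ppos sq1 sq1' mu1 nu1 or1] .
  have o2: "om2' = - (sqrt Q * nu2) \<and> om2 = sqrt Q * mu2"
    using sign_real[OF Qpos sq2' sq2 nu2 mu2 or2] .

  define y1 where "y1 = ldot x v1"
  define y2 where "y2 = ldot x v2"
  define y3 where "y3 = ldot x w"
  have xm1: "W * ldot x ?m1 = - (mu1 * (P*y2 - G*y1 + sqrt P * y3))"
  proof -
    have "y3 * om1 = -(ldot x ?m1 * (P*Q - G^2) - y1 * (0 * Q - G * mu1) + y2 * (0 * G - P * mu1))"
      using I[of x ?m1] unfolding y1_def[symmetric] y2_def[symmetric] y3_def[symmetric] om1_def[symmetric]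
        mu1_def[symmetric] B1(4) .
    then show ?thesis using o1 WPQ by (simp add: algebra_simps)
  qed
  have xn1: "W * ldot x ?n1 = - (nu1 * (P*y2 - G*y1 - sqrt P * y3))"
  proof -
    have "y3 * om1' = -(ldot x ?n1 * (P*Q - G^2) - y1 * (0 * Q - G * nu1) + y2 * (0 * G - P * nu1))"
      using I[of x ?n1] unfolding y1_def[symmetric] y2_def[symmetric] y3_def[symmetric] om1'_def[symmetric]
        nu1_def[symmetric] B1(3) .
    then show ?thesis using o1 WPQ by (simp add: algebra_simps)
  qed
  have xm2: "W * ldot x ?m2 = - (mu2 * (Q*y1 - G*y2 - sqrt Q * y3))"
  proof -
    have "y3 * om2 = -(ldot x ?m2 * (P*Q - G^2) - y1 * (mu2 * Q - G * 0) + y2 * (mu2 * G - P * 0))"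
      using I[of x ?m2] unfolding y1_def[symmetric] y2_def[symmetric] y3_def[symmetric] om2_def[symmetric]
        mu2_def[symmetric] B2(4) .
    then show ?thesis using o2 WPQ by (simp add: algebra_simps)
  qed
  have xn2: "W * ldot x ?n2 = - (nu2 * (Q*y1 - G*y2 + sqrt Q * y3))"
  proof -
    have "y3 * om2' = -(ldot x ?n2 * (P*Q - G^2) - y1 * (nu2 * Q - G * 0) + y2 * (nu2 * G - P * 0))"
      using I[of x ?n2] unfolding y1_def[symmetric] y2_def[symmetric] y3_def[symmetric] om2'_def[symmetric]
        nu2_def[symmetric] B2(3) .
    then show ?thesis using o2 WPQ by (simp add: algebra_simps)
  qed
  have h1: "(y1 \<ge> 0 \<and> mu1 * (P*y2 - G*y1 + sqrt P * y3) > 0) \<or> (y1 \<le> 0 \<and> nu1 * (P*y2 - G*y1 - sqrt P * y3) < 0)"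
  proof -
    have "ldot x ?m1 < 0 \<Longrightarrow> mu1 * (P*y2 - G*y1 + sqrt P * y3) > 0"
      using xm1 Wpos by (metis mult_pos_neg neg_less_0_iff_less)
    moreover have "ldot x ?n1 > 0 \<Longrightarrow> nu1 * (P*y2 - G*y1 - sqrt P * y3) < 0"
      using xn1 Wpos by (metis mult_pos_pos neg_0_less_iff_less)
    ultimately show ?thesis using H unfolding Hp_def y1_def by blast
  qed
  have h2: "(y2 \<ge> 0 \<and> mu2 * (Q*y1 - G*y2 - sqrt Q * y3) > 0) \<or> (y2 \<le> 0 \<and> nu2 * (Q*y1 - G*y2 + sqrt Q * y3) < 0)"
  proof -
    have "ldot x ?m2 < 0 \<Longrightarrow> mu2 * (Q*y1 - G*y2 - sqrt Q * y3) > 0"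
      using xm2 Wpos by (metis mult_pos_neg neg_less_0_iff_less)
    moreover have "ldot x ?n2 > 0 \<Longrightarrow> nu2 * (Q*y1 - G*y2 + sqrt Q * y3) < 0"
      using xn2 Wpos by (metis mult_pos_pos neg_0_less_iff_less)
    ultimately show ?thesis using H unfolding Hp_def y2_def by blast
  qed
  show False using final_real[OF Ppos Qpos Gneg GG mu1 nu1 mu2 nu2 h1 h2] .
qed


theorem corollary4p4:
  fixes v1 v2 :: "real^3" and a1 b1 a2 b2 :: real
  assumes "spacelike v1" and "spacelike v2"
    and "consistently_oriented v1 v2"
    and "ultraparallel v1 v2"
    and "a1 > 0" and "b1 > 0" and "a2 > 0" and "b2 > 0"
  shows "crooked_plane v1 (a1 *\<^sub>R vminus v1 - b1 *\<^sub>R vplus v1) \<inter>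
         crooked_plane v2 (a2 *\<^sub>R vminus v2 - b2 *\<^sub>R vplus v2) = {}"
proof (rule ccontr)
  assume "crooked_plane v1 (a1 *\<^sub>R vminus v1 - b1 *\<^sub>R vplus v1) \<inter>
         crooked_plane v2 (a2 *\<^sub>R vminus v2 - b2 *\<^sub>R vplus v2) \<noteq> {}"
  then obtain x where x1: "x \<in> crooked_plane v1 (a1 *\<^sub>R vminus v1 - b1 *\<^sub>R vplus v1)"
    and x2: "x \<in> crooked_plane v2 (a2 *\<^sub>R vminus v2 - b2 *\<^sub>R vplus v2)" by blast
  have "Hp v1 x" using cp_H[OF assms(1) assms(5) assms(6) x1] .
  moreover have "Hp v2 x" using cp_H[OF assms(2) assms(7) assms(8) x2] .
  ultimately show False using main[OF assms(3) assms(4)] by blast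
qed

end
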